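(* Let $\Pi\subseteq\Sigma$. The cone $\sigma_\Pi$ contains a nonzero linear subspace of $N_\mathbb{R}$ if and only if $\sigma^1_\Pi\cap\sigma^2_\Pi\ne\{0\}$.
   Context: $N\cong\mathbb{Z}^d$, $\sigma\subset N_\mathbb{R}$ a strongly convex rational polyhedral cone of dimension $d$, $\Sigma=\sigma(1)$ its set of rays, $n(\rho)$ the primitive generator of $\rho$. $\sigma_\Pi$ is the cone generated over $\mathbb{R}_{\ge0}$ by $-n(\rho)$, $\rho\in\Pi$, and $n(\rho)$, $\rho\in\Sigma\setminus\Pi$; $\sigma^1_\Pi$ is the cone generated over $\mathbb{R}_{\ge0}$ by $n(\rho)$, $\rho\in\Pi$; $\sigma^2_\Pi$ is the cone generated over $\mathbb{R}_{\ge0}$ by $n(\rho)$, $\rho\in\Sigma\setminus\Pi$ (the cone generated by the empty set is $\{0\}$). *)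

theory Defs
  imports "HOL-Analysis.Analysis"
begin

text \<open>Lattice N = Z^d realised as the integer points of real^'d (d = CARD('d)).\<close>
definition lattice_pt :: "real^'d \<Rightarrow> bool" where
  "lattice_pt x \<longleftrightarrow> (\<forall>i. x $ i \<in> \<int>)"

definition gen_cone :: "(real^'d) set \<Rightarrow> (real^'d) set" where
  "gen_cone S = {y. \<exists>c. (\<forall>v\<in>S. 0 \<le> c v) \<and> y = (\<Sum>v\<in>S. c v *\<^sub>R v)}"

definition rational_polyhedral_cone :: "(real^'d) set \<Rightarrow> bool" where
  "rational_polyhedral_cone \<sigma> \<longleftrightarrow>
     (\<exists>S. finite S \<and> (\<forall>v\<in>S. lattice_pt v) \<and> \<sigma> = gen_cone S)"

definition strongly_convex :: "(real^'d) set \<Rightarrow> bool" where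
  "strongly_convex \<sigma> \<longleftrightarrow> \<sigma> \<inter> uminus ` \<sigma> = {0}"

definition rays :: "(real^'d) set \<Rightarrow> (real^'d) set set" where
  "rays \<sigma> = {\<rho>. \<rho> face_of \<sigma> \<and> aff_dim \<rho> = 1}"

definition prim_gen :: "(real^'d) set \<Rightarrow> real^'d" where
  "prim_gen \<rho> = (THE v. v \<in> \<rho> \<and> v \<noteq> 0 \<and> lattice_pt v \<and>
                    (\<forall>w\<in>\<rho>. lattice_pt w \<longrightarrow> (\<exists>k::nat. w = real k *\<^sub>R v)))"

definition sigma_Pi :: "(real^'d) set \<Rightarrow> (real^'d) set set \<Rightarrow> (real^'d) set" where
  "sigma_Pi \<sigma> P = gen_cone ((\<lambda>\<rho>. - prim_gen \<rho>) ` P \<union> prim_gen ` (rays \<sigma> - P))"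

definition sigma1_Pi :: "(real^'d) set set \<Rightarrow> (real^'d) set" where
  "sigma1_Pi P = gen_cone (prim_gen ` P)"

definition sigma2_Pi :: "(real^'d) set \<Rightarrow> (real^'d) set set \<Rightarrow> (real^'d) set" where
  "sigma2_Pi \<sigma> P = gen_cone (prim_gen ` (rays \<sigma> - P))"

end

theory Submission
  imports Defs
begin

lemma gc_zero: "0 \<in> gen_cone S"
  unfolding gen_cone_def by (rule CollectI, rule exI[of _ "\<lambda>_. 0"]) simp

lemma gc_add:
  assumes "finite S" "x \<in> gen_cone S" "y \<in> gen_cone S"
  shows "x + y \<in> gen_cone S"
proof -
  obtain c where c: "\<forall>v\<in>S. 0 \<le> c v" "x = (\<Sum>v\<in>S. c v *\<^sub>R v)" using assms(2) unfolding gen_cone_def by auto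
  obtain d where d: "\<forall>v\<in>S. 0 \<le> d v" "y = (\<Sum>v\<in>S. d v *\<^sub>R v)" using assms(3) unfolding gen_cone_def by auto
  have "x + y = (\<Sum>v\<in>S. (c v + d v) *\<^sub>R v)" using c d by (simp add: sum.distrib scaleR_add_left)
  then show ?thesis unfolding gen_cone_def using c d by (intro CollectI exI[of _ "\<lambda>v. c v + d v"]) auto
qed

lemma gc_scale:
  assumes "x \<in> gen_cone S" "0 \<le> t"
  shows "t *\<^sub>R x \<in> gen_cone S"
proof -
  obtain c where c: "\<forall>v\<in>S. 0 \<le> c v" "x = (\<Sum>v\<in>S. c v *\<^sub>R v)" using assms(1) unfolding gen_cone_def by auto
  have "t *\<^sub>R x = (\<Sum>v\<in>S. (t * c v) *\<^sub>R v)" using c by (simp add: scaleR_sum_right)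
  then show ?thesis unfolding gen_cone_def using c assms(2) by (intro CollectI exI[of _ "\<lambda>v. t * c v"]) auto
qed

lemma gc_mem:
  assumes "finite S" "v \<in> S"
  shows "v \<in> gen_cone S"
proof -
  have "v = (\<Sum>w\<in>S. (if w = v then 1 else 0) *\<^sub>R w)"
  proof -
    have "(\<Sum>w\<in>S. (if w = v then 1 else 0) *\<^sub>R w) = (\<Sum>w\<in>S. if w = v then w else 0)"
      by (rule sum.cong) auto
    then show ?thesis using assms by (simp add: sum.delta)
  qed
  then show ?thesis unfolding gen_cone_def by (intro CollectI exI[of _ "\<lambda>w. if w = v then 1 else 0"]) auto
qed

lemma gc_sub:
  assumes "finite S" "S \<subseteq> C" "0 \<in> C" "\<And>x y. x \<in> C \<Longrightarrow> y \<in> C \<Longrightarrow> x + y \<in> C"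
    "\<And>x t. x \<in> C \<Longrightarrow> 0 \<le> t \<Longrightarrow> t *\<^sub>R x \<in> C"
  shows "gen_cone S \<subseteq> C"
proof
  fix y assume "y \<in> gen_cone S"
  then obtain c where c: "\<forall>v\<in>S. 0 \<le> c v" "y = (\<Sum>v\<in>S. c v *\<^sub>R v)" unfolding gen_cone_def by auto
  have "\<forall>T. T \<subseteq> S \<longrightarrow> (\<Sum>v\<in>T. c v *\<^sub>R v) \<in> C"
  proof (intro allI impI)
    fix T assume "T \<subseteq> S"
    then have "finite T" using assms(1) finite_subset by blast
    from this \<open>T \<subseteq> S\<close> show "(\<Sum>v\<in>T. c v *\<^sub>R v) \<in> C"
    proof (induction T rule: finite_induct)
      case empty then show ?case using assms(3) by simp
    next
      case (insert a F)
      then show ?case using assms(2,4,5) c(1) by auto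
    qed
  qed
  then show "y \<in> C" using c by blast
qed

lemma gc_mono:
  assumes "finite Y" "X \<subseteq> Y"
  shows "gen_cone X \<subseteq> gen_cone Y"
  using assms finite_subset[OF assms(2,1)]
  by (intro gc_sub) (auto intro: gc_zero gc_add gc_scale gc_mem)

lemma gc_union:
  assumes "finite X" "finite Y" "x \<in> gen_cone (X \<union> Y)"
  shows "\<exists>a b. a \<in> gen_cone X \<and> b \<in> gen_cone Y \<and> x = a + b"
proof -
  obtain c where c: "\<forall>v\<in>X \<union> Y. 0 \<le> c v" "x = (\<Sum>v\<in>X \<union> Y. c v *\<^sub>R v)" using assms(3) unfolding gen_cone_def by auto
  define d where "d v = (if v \<in> X then 0 else c v)" for v
  have e1: "x = (\<Sum>v\<in>X. c v *\<^sub>R v) + (\<Sum>v\<in>Y - X. c v *\<^sub>R v)"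
  proof -
    have "X \<union> Y = X \<union> (Y - X)" by auto
    then have "x = (\<Sum>v\<in>X \<union> (Y - X). c v *\<^sub>R v)" using c(2) by simp
    also have "\<dots> = (\<Sum>v\<in>X. c v *\<^sub>R v) + (\<Sum>v\<in>Y - X. c v *\<^sub>R v)"
      using assms(1,2) by (intro sum.union_disjoint) auto
    finally show ?thesis .
  qed
  have e2: "(\<Sum>v\<in>Y - X. c v *\<^sub>R v) = (\<Sum>v\<in>Y. d v *\<^sub>R v)"
  proof -
    have "(\<Sum>v\<in>Y. d v *\<^sub>R v) = (\<Sum>v\<in>Y - X. d v *\<^sub>R v)"
      using assms(2) by (intro sum.mono_neutral_right) (auto simp: d_def)
    then show ?thesis by (simp add: d_def)
  qed
  have m1: "(\<Sum>v\<in>X. c v *\<^sub>R v) \<in> gen_cone X" unfolding gen_cone_def using c(1) by auto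
  have m2: "(\<Sum>v\<in>Y. d v *\<^sub>R v) \<in> gen_cone Y"
  proof -
    have "\<forall>v\<in>Y. 0 \<le> d v" using c(1) by (auto simp: d_def)
    then show ?thesis unfolding gen_cone_def by blast
  qed
  have "x = (\<Sum>v\<in>X. c v *\<^sub>R v) + (\<Sum>v\<in>Y. d v *\<^sub>R v)" using e1 e2 by simp
  then show ?thesis using m1 m2 by blast
qed

lemma gc_neg:
  assumes "x \<in> gen_cone (uminus ` X)"
  shows "- x \<in> gen_cone X"
proof -
  obtain c where c: "\<forall>v\<in>uminus ` X. 0 \<le> c v" "x = (\<Sum>v\<in>uminus ` X. c v *\<^sub>R v)" using assms unfolding gen_cone_def by auto
  have "x = (\<Sum>v\<in>X. c (- v) *\<^sub>R (- v))" using c(2) by (simp add: sum.reindex inj_on_def)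
  then have "- x = (\<Sum>v\<in>X. c (- v) *\<^sub>R v)" by (simp add: sum_negf)
  then show ?thesis unfolding gen_cone_def using c(1) by auto
qed

lemma gc_neg2:
  assumes "x \<in> gen_cone X"
  shows "- x \<in> gen_cone (uminus ` X)"
proof -
  have "uminus ` uminus ` X = X" by (simp add: image_image)
  then show ?thesis using gc_neg[of x "uminus ` X"] assms by simp
qed

lemma gc_convex:
  assumes "finite S"
  shows "convex (gen_cone S)"
  unfolding convex_def using assms by (auto intro!: gc_add gc_scale)

lemma face_cone0:
  assumes F: "F face_of C" and "0 \<in> C" and sc: "\<And>x t. x \<in> C \<Longrightarrow> 0 \<le> t \<Longrightarrow> t *\<^sub>R x \<in> C"
    and "F \<noteq> {}"
  shows "0 \<in> F"
proof -
  obtain x where x: "x \<in> F" using assms(4) by auto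
  show ?thesis
  proof (cases "x = 0")
    case True then show ?thesis using x by simp
  next
    case False
    have "x \<in> C" using x face_of_imp_subset[OF F] by auto
    have "x \<in> open_segment 0 (2 *\<^sub>R x)" unfolding in_segment using False
      by (intro conjI exI[of _ "1/2"]) auto
    then show ?thesis using face_ofD[OF F _ \<open>0 \<in> C\<close> sc[OF \<open>x \<in> C\<close>, of 2] x] by auto
  qed
qed

lemma face_cone_scale:
  assumes F: "F face_of C" and "0 \<in> C" and sc: "\<And>x t. x \<in> C \<Longrightarrow> 0 \<le> t \<Longrightarrow> t *\<^sub>R x \<in> C"
    and "w \<in> F" "0 \<le> t"
  shows "t *\<^sub>R w \<in> F"
proof -
  have F0: "0 \<in> F" using face_cone0[OF F \<open>0 \<in> C\<close> sc] assms(4) by blast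
  have wC: "w \<in> C" using assms(4) face_of_imp_subset[OF F] by auto
  consider "w = 0" | "t \<le> 1" | "w \<noteq> 0" "1 < t" by linarith
  then show ?thesis
  proof cases
    case 1 then show ?thesis using F0 by simp
  next
    case 2
    have "convex F" using face_of_imp_convex[OF F] .
    then have "(1 - t) *\<^sub>R 0 + t *\<^sub>R w \<in> F" using F0 assms(4,5) 2
      by (intro convexD) auto
    then show ?thesis by simp
  next
    case 3
    have "w \<in> open_segment 0 (t *\<^sub>R w)" unfolding in_segment using 3
      by (intro conjI exI[of _ "1/t"]) auto
    then show ?thesis using face_ofD[OF F _ \<open>0 \<in> C\<close> sc[OF wC, of t] assms(4)] assms(5) by auto
  qed
qed

lemma face_cone_summand:
  assumes F: "F face_of C" and "0 \<in> C" and sc: "\<And>x t. x \<in> C \<Longrightarrow> 0 \<le> t \<Longrightarrow> t *\<^sub>R x \<in> C"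
    and "a \<in> C" "b \<in> C" "a + b \<in> F"
  shows "a \<in> F"
proof (cases "a = b")
  case True
  have "(1/2) *\<^sub>R (a + b) \<in> F" by (rule face_cone_scale[OF F \<open>0 \<in> C\<close> sc assms(6)]) auto
  then show ?thesis using True by (simp add: scaleR_2[symmetric])
next
  case False
  have "a + b \<in> open_segment (2 *\<^sub>R a) (2 *\<^sub>R b)" unfolding in_segment using False
    by (intro conjI exI[of _ "1/2"]) (auto simp: algebra_simps)
  then have "2 *\<^sub>R a \<in> F" using face_ofD[OF F _ sc[OF assms(4)] sc[OF assms(5)] assms(6)] by auto
  from face_cone_scale[OF F \<open>0 \<in> C\<close> sc this, of "1/2"] show ?thesis by simp
qed

lemma ray_shape:
  assumes fin: "finite S" and sc: "strongly_convex (gen_cone S)"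
    and r: "\<rho> \<in> rays (gen_cone S)"
  shows "\<exists>v\<in>S. v \<noteq> 0 \<and> \<rho> = (\<lambda>t. t *\<^sub>R v) ` {0..}"
proof -
  let ?C = "gen_cone S"
  have F: "\<rho> face_of ?C" and ad: "aff_dim \<rho> = 1" using r unfolding rays_def by auto
  have C0: "0 \<in> ?C" by (rule gc_zero)
  have scl: "\<And>x t. x \<in> ?C \<Longrightarrow> 0 \<le> t \<Longrightarrow> t *\<^sub>R x \<in> ?C" by (rule gc_scale)
  have ne: "\<rho> \<noteq> {}" using ad by auto
  have "\<rho> \<noteq> {0}" using ad by auto
  then obtain y where y: "y \<in> \<rho>" "y \<noteq> 0" using ne by blast
  have yC: "y \<in> ?C" using y face_of_imp_subset[OF F] by auto
  then obtain c where c: "\<forall>v\<in>S. 0 \<le> c v" "y = (\<Sum>v\<in>S. c v *\<^sub>R v)" unfolding gen_cone_def by auto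
  obtain v where v: "v \<in> S" "c v *\<^sub>R v \<noteq> 0"
    using c(2) y(2) by (metis (no_types, lifting) sum.neutral)
  have cv: "0 < c v" using v c(1) by (metis less_eq_real_def scale_zero_left)
  have v0: "v \<noteq> 0" using v by auto
  have "y = c v *\<^sub>R v + (\<Sum>w\<in>S - {v}. c w *\<^sub>R w)"
    using c(2) fin v(1) by (simp add: sum.remove)
  moreover have "(\<Sum>w\<in>S - {v}. c w *\<^sub>R w) \<in> ?C"
    using gc_mono[OF fin, of "S - {v}"] c(1) unfolding gen_cone_def by auto
  moreover have "c v *\<^sub>R v \<in> ?C" using gc_mem[OF fin v(1)] cv by (intro gc_scale) auto
  ultimately have "c v *\<^sub>R v \<in> \<rho>" using face_cone_summand[OF F C0 scl] y(1) by simp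
  from face_cone_scale[OF F C0 scl this, of "1 / c v"] cv have vr: "v \<in> \<rho>" by simp
  have vC: "v \<in> ?C" using gc_mem[OF fin v(1)] .
  have col: "collinear \<rho>" unfolding collinear_aff_dim using ad by simp
  have F0: "0 \<in> \<rho>" using face_cone0[OF F C0 scl ne] .
  have "\<rho> \<subseteq> (\<lambda>t. t *\<^sub>R v) ` {0..}"
  proof
    fix w assume w: "w \<in> \<rho>"
    have "collinear {0, v, w}" by (rule collinear_subset[OF col]) (use w vr F0 in auto)
    then have "w = 0 \<or> (\<exists>c. w = c *\<^sub>R v)" unfolding collinear_lemma using v0 by blast
    then obtain t where t: "w = t *\<^sub>R v" by (metis scale_zero_left)
    have "0 \<le> t"
    proof (rule ccontr)
      assume "\<not> 0 \<le> t"
      have wC: "w \<in> ?C" using w face_of_imp_subset[OF F] by auto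
      have "(- 1 / t) *\<^sub>R w \<in> ?C" using \<open>\<not> 0 \<le> t\<close> by (intro gc_scale[OF wC]) auto
      then have "- v \<in> ?C" using t \<open>\<not> 0 \<le> t\<close> by simp
      then have "v \<in> ?C \<inter> uminus ` ?C" using vC by (auto intro: image_eqI[of _ _ "- v"])
      then show False using sc v0 unfolding strongly_convex_def by auto
    qed
    then show "w \<in> (\<lambda>t. t *\<^sub>R v) ` {0..}" using t by auto
  qed
  moreover have "(\<lambda>t. t *\<^sub>R v) ` {0..} \<subseteq> \<rho>"
    using face_cone_scale[OF F C0 scl vr] by auto
  ultimately show ?thesis using v(1) v0 by blast
qed

lemma lat_diff: "lattice_pt x \<Longrightarrow> lattice_pt y \<Longrightarrow> lattice_pt (x - y)"
  unfolding lattice_pt_def by auto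

lemma lat_nat: "lattice_pt x \<Longrightarrow> lattice_pt (real k *\<^sub>R x)"
  unfolding lattice_pt_def by auto

lemma prim_exists:
  fixes v :: "real^'d"
  assumes lv: "lattice_pt v" and v0: "v \<noteq> 0"
  defines "R \<equiv> (\<lambda>t. t *\<^sub>R v) ` {0..}"
  shows "\<exists>u. u \<in> R \<and> u \<noteq> 0 \<and> lattice_pt u \<and> (\<forall>w\<in>R. lattice_pt w \<longrightarrow> (\<exists>k::nat. w = real k *\<^sub>R u))"
proof -
  obtain i where vi: "v $ i \<noteq> 0" using v0 by (metis vec_eq_iff zero_index)
  obtain j where j: "v $ i = of_int j" using lv unfolding lattice_pt_def by (metis Ints_cases)
  define m where "m = \<bar>v $ i\<bar>"
  have m1: "m \<ge> 1" using j vi unfolding m_def by auto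
  have mnat: "m = real (nat \<bar>j\<bar>)" using j unfolding m_def by simp
  define Q where "Q n \<longleftrightarrow> 0 < n \<and> lattice_pt ((real n / m) *\<^sub>R v)" for n :: nat
  have Qm: "Q (nat \<bar>j\<bar>)" unfolding Q_def using m1 lv mnat[symmetric] by auto
  define n0 where "n0 = (LEAST n. Q n)"
  have Qn0: "Q n0" unfolding n0_def using Qm by (rule LeastI)
  define u where "u = (real n0 / m) *\<^sub>R v"
  have uR: "u \<in> R" unfolding u_def R_def using m1 by auto
  have u0: "u \<noteq> 0" unfolding u_def using Qn0 m1 v0 unfolding Q_def by auto
  have lu: "lattice_pt u" using Qn0 unfolding Q_def u_def by auto
  have "\<exists>k::nat. w = real k *\<^sub>R u" if wR: "w \<in> R" and lw: "lattice_pt w" for w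
  proof -
    obtain t where t: "0 \<le> t" "w = t *\<^sub>R v" using wR unfolding R_def by auto
    have "w $ i \<in> \<int>" using lw unfolding lattice_pt_def by blast
    then have "t * v $ i \<in> \<int>" using t(2) by simp
    then have "\<bar>t * v $ i\<bar> \<in> \<int>" by (rule Ints_abs)
    then have tm: "t * m \<in> \<int>" using t(1) unfolding m_def by (simp add: abs_mult)
    then obtain z where z: "t * m = of_int z" by (metis Ints_cases)
    have "0 \<le> t * m" using t(1) m1 by simp
    then have "z \<ge> 0" using z by simp
    define n where "n = nat z"
    have tn: "t = real n / m" using z \<open>z \<ge> 0\<close> m1 unfolding n_def by (simp add: field_simps)
    define q where "q = n div n0"
    define r where "r = n mod n0"
    have nqr: "n = q * n0 + r" unfolding q_def r_def by simp
    have rlt: "r < n0" using Qn0 unfolding r_def Q_def by simp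
    have "(real r / m) *\<^sub>R v = w - real q *\<^sub>R u"
      unfolding t(2) tn u_def nqr using m1 by (simp add: field_simps scaleR_left_distrib[symmetric])
    then have lr: "lattice_pt ((real r / m) *\<^sub>R v)" using lat_diff[OF lw lat_nat[OF lu]] by simp
    have "r = 0"
    proof (rule ccontr)
      assume "r \<noteq> 0"
      then have "Q r" unfolding Q_def using lr by simp
      then have "n0 \<le> r" unfolding n0_def by (rule Least_le)
      then show False using rlt by simp
    qed
    then have "w = real q *\<^sub>R u"
      unfolding t(2) tn u_def nqr using m1 by (simp add: field_simps)
    then show ?thesis by blast
  qed
  then show ?thesis using uR u0 lu by blast
qed

lemma prim_gen_in:
  fixes v :: "real^'d"
  assumes lv: "lattice_pt v" and v0: "v \<noteq> 0"
  shows "prim_gen ((\<lambda>t. t *\<^sub>R v) ` {0..}) \<in> (\<lambda>t. t *\<^sub>R v) ` {0..}"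
proof -
  define R where "R = (\<lambda>t. t *\<^sub>R v) ` {0..}"
  let ?P = "\<lambda>u. u \<in> R \<and> u \<noteq> 0 \<and> lattice_pt u \<and> (\<forall>w\<in>R. lattice_pt w \<longrightarrow> (\<exists>k::nat. w = real k *\<^sub>R u))"
  obtain u where u: "?P u" using prim_exists[OF lv v0] unfolding R_def by blast
  have uniq: "x = u" if x: "?P x" for x
  proof -
    obtain k :: nat where k: "x = real k *\<^sub>R u" using u x by blast
    obtain l :: nat where l: "u = real l *\<^sub>R x" using u x by blast
    have "u = (real l * real k) *\<^sub>R u" using k l by (metis scaleR_scaleR)
    then have "real l * real k = 1" using u by (metis scaleR_cancel_right scaleR_one)
    then have "k = 1" by (metis of_nat_1 of_nat_mult nat_mult_eq_1_iff of_nat_eq_iff)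
    then show ?thesis using k by simp
  qed
  have "?P (prim_gen R)" unfolding prim_gen_def
    by (rule theI[of ?P u, OF u uniq])
  then show ?thesis unfolding R_def by blast
qed

theorem mainTheorem7:
  fixes \<sigma> :: "(real^'d) set" and P :: "(real^'d) set set"
  assumes "rational_polyhedral_cone \<sigma>"
    and "strongly_convex \<sigma>"
    and "aff_dim \<sigma> = int CARD('d)"
    and "P \<subseteq> rays \<sigma>"
  shows "(\<exists>L. subspace L \<and> L \<noteq> {0} \<and> L \<subseteq> sigma_Pi \<sigma> P)
           \<longleftrightarrow> sigma1_Pi P \<inter> sigma2_Pi \<sigma> P \<noteq> {0}"
proof -
  obtain S where fin: "finite S" and lat: "\<forall>v\<in>S. lattice_pt v" and sS: "\<sigma> = gen_cone S"
    using assms(1) unfolding rational_polyhedral_cone_def by blast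
  have sc: "strongly_convex (gen_cone S)" using assms(2) sS by simp
  have fr: "finite (rays \<sigma>)"
  proof -
    have "rays \<sigma> \<subseteq> (\<lambda>v. (\<lambda>t. t *\<^sub>R v) ` {0..}) ` S"
      using ray_shape[OF fin sc] sS by blast
    then show ?thesis using fin finite_subset by blast
  qed
  have pin: "prim_gen \<rho> \<in> \<sigma>" if r: "\<rho> \<in> rays \<sigma>" for \<rho>
  proof -
    obtain v where v: "v \<in> S" "v \<noteq> 0" "\<rho> = (\<lambda>t. t *\<^sub>R v) ` {0..}"
      using ray_shape[OF fin sc] r sS by blast
    obtain t where t: "0 \<le> t" "prim_gen \<rho> = t *\<^sub>R v"
      using prim_gen_in[of v] lat v by auto
    show ?thesis unfolding t(2) sS using gc_mem[OF fin v(1)] t(1) by (rule gc_scale)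
  qed
  define A where "A = prim_gen ` P"
  define B where "B = prim_gen ` (rays \<sigma> - P)"
  have fA: "finite A" unfolding A_def using fr assms(4) finite_subset by blast
  have fB: "finite B" unfolding B_def using fr by simp
  have fnA: "finite (uminus ` A)" using fA by simp
  have Asub: "A \<subseteq> \<sigma>" unfolding A_def using pin assms(4) by blast
  have Bsub: "B \<subseteq> \<sigma>" unfolding B_def using pin by blast
  have scl: "\<And>x t. x \<in> \<sigma> \<Longrightarrow> 0 \<le> t \<Longrightarrow> t *\<^sub>R x \<in> \<sigma>" unfolding sS by (rule gc_scale)
  have add: "\<And>x y. x \<in> \<sigma> \<Longrightarrow> y \<in> \<sigma> \<Longrightarrow> x + y \<in> \<sigma>" unfolding sS using fin by (rule gc_add)
  have z: "0 \<in> \<sigma>" unfolding sS by (rule gc_zero)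
  have K1: "gen_cone A \<subseteq> \<sigma>" by (rule gc_sub[OF fA Asub z add scl])
  have K2: "gen_cone B \<subseteq> \<sigma>" by (rule gc_sub[OF fB Bsub z add scl])
  have eP: "sigma_Pi \<sigma> P = gen_cone (uminus ` A \<union> B)"
    unfolding sigma_Pi_def A_def B_def by (simp add: image_image)
  have e1: "sigma1_Pi P = gen_cone A" unfolding sigma1_Pi_def A_def ..
  have e2: "sigma2_Pi \<sigma> P = gen_cone B" unfolding sigma2_Pi_def B_def ..
  have fU: "finite (uminus ` A \<union> B)" using fnA fB by simp
  have pointed: "a = 0" if "a \<in> \<sigma>" "b \<in> \<sigma>" "a + b = 0" for a b
  proof -
    have "a = - b" using that(3) by (simp add: eq_neg_iff_add_eq_0)
    then have "a \<in> \<sigma> \<inter> uminus ` \<sigma>" using that by auto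
    then show ?thesis using assms(2) unfolding strongly_convex_def by auto
  qed
  show ?thesis
  proof
    assume "\<exists>L. subspace L \<and> L \<noteq> {0} \<and> L \<subseteq> sigma_Pi \<sigma> P"
    then obtain L where L: "subspace L" "L \<noteq> {0}" "L \<subseteq> gen_cone (uminus ` A \<union> B)" using eP by auto
    obtain x where x: "x \<in> L" "x \<noteq> 0" using L(1,2) subspace_0 by blast
    have mx: "- x \<in> L" using L(1) x(1) by (rule subspace_neg)
    obtain a1 b1 where ab1: "a1 \<in> gen_cone (uminus ` A)" "b1 \<in> gen_cone B" "x = a1 + b1"
      using gc_union[OF fnA fB] L(3) x(1) by blast
    obtain a2 b2 where ab2: "a2 \<in> gen_cone (uminus ` A)" "b2 \<in> gen_cone B" "- x = a2 + b2"
      using gc_union[OF fnA fB] L(3) mx by blast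
    have na1: "- a1 \<in> gen_cone A" using ab1(1) by (rule gc_neg)
    have na2: "- a2 \<in> gen_cone A" using ab2(1) by (rule gc_neg)
    have h0: "(a1 + b1) + (a2 + b2) = 0" unfolding ab1(3)[symmetric] ab2(3)[symmetric] by simp
    have "b1 + b2 = ((a1 + b1) + (a2 + b2)) + (- a1) + (- a2)" by (simp add: algebra_simps)
    then have eq: "b1 + b2 = (- a1) + (- a2)" using h0 by simp
    show "sigma1_Pi P \<inter> sigma2_Pi \<sigma> P \<noteq> {0}"
    proof
      assume h: "sigma1_Pi P \<inter> sigma2_Pi \<sigma> P = {0}"
      have "b1 + b2 \<in> gen_cone B" using fB ab1(2) ab2(2) by (rule gc_add)
      moreover have "b1 + b2 \<in> gen_cone A" unfolding eq using fA na1 na2 by (rule gc_add)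
      ultimately have s0: "b1 + b2 = 0" using h e1 e2 by auto
      have "b1 = 0" using pointed[of b1 b2] s0 ab1(2) ab2(2) K2 by auto
      moreover have "- a1 = 0" using pointed[of "- a1" "- a2"] s0 eq na1 na2 K1 by auto
      ultimately show False using x(2) ab1(3) by simp
    qed
  next
    assume "sigma1_Pi P \<inter> sigma2_Pi \<sigma> P \<noteq> {0}"
    then obtain x where x: "x \<in> gen_cone A" "x \<in> gen_cone B" "x \<noteq> 0"
      using e1 e2 gc_zero[of A] gc_zero[of B] by blast
    have s1: "gen_cone B \<subseteq> gen_cone (uminus ` A \<union> B)" using fU by (rule gc_mono) auto
    have s2: "gen_cone (uminus ` A) \<subseteq> gen_cone (uminus ` A \<union> B)" using fU by (rule gc_mono) auto
    have xin: "x \<in> gen_cone (uminus ` A \<union> B)" using s1 x(2) by auto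
    have mxin: "- x \<in> gen_cone (uminus ` A \<union> B)" using s2 gc_neg2[OF x(1)] by auto
    have "span {x} \<subseteq> sigma_Pi \<sigma> P"
    proof
      fix y assume "y \<in> span {x}"
      then obtain k where k: "y = k *\<^sub>R x" by (auto simp: span_singleton)
      show "y \<in> sigma_Pi \<sigma> P"
      proof (cases "0 \<le> k")
        case True then show ?thesis unfolding eP k using xin by (rule gc_scale[rotated])
      next
        case False
        have "(- k) *\<^sub>R (- x) \<in> gen_cone (uminus ` A \<union> B)" using mxin False by (intro gc_scale) auto
        then show ?thesis unfolding eP k by simp
      qed
    qed
    moreover have "span {x} \<noteq> {0}" using x(3) span_base[of x "{x}"] by auto
    ultimately show "\<exists>L. subspace L \<and> L \<noteq> {0} \<and> L \<subseteq> sigma_Pi \<sigma> P"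
      using subspace_span by blast
  qed
qed

end
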